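(* Let $\nu$ be an ergodic $S$-invariant probability measure on $X_\eta$ different from the Dirac measure at the all-zero sequence, and let $k\ge1$. Let $R_k$ denote the rotation $z\mapsto z+1$ on $\mathbb Z/b_k\mathbb Z$ with uniform measure. Then $(S,X_\eta,\nu)$ is not disjoint from $R_k$ (i.e. they admit a joining other than the product measure).
   Context: Let $S$ be the shift on $\{0,1\}^{\mathbb Z}$, $(Sx)(n)=x(n+1)$. Let $\mathscr{B}=\{b_1,b_2,\dots\}\subset\{2,3,\dots\}$ with $\gcd(b_i,b_j)=1$ for $i\ne j$ and $\sum_i1/b_i<\infty$. Define $\eta(n)=1$ iff $b_i\nmid n$ for all $i$ (else $0$), and let $X_\eta$ be the set of $y\in\{0,1\}^{\mathbb Z}$ all of whose finite blocks occur in $\eta$. Two measure-preserving systems are disjoint if the product measure is their only joining (invariant measure on the product with the given marginals). *)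

theory Defs
  imports "HOL-Probability.Probability"
begin

text \<open>The full shift on {0,1}^Z, with points modelled as functions int => bool
  (True = 1, False = 0), and its product (= Borel) sigma-algebra.\<close>

definition shift :: "(int \<Rightarrow> bool) \<Rightarrow> (int \<Rightarrow> bool)" where
  "shift x = (\<lambda>n. x (n + 1))"

definition shift_space :: "(int \<Rightarrow> bool) measure" where
  "shift_space = (\<Pi>\<^sub>M n\<in>(UNIV::int set). (count_space (UNIV::bool set)))"

text \<open>The B-free characteristic sequence, with B = {b i | i :: nat}.\<close>

definition Bfree_eta :: "(nat \<Rightarrow> nat) \<Rightarrow> int \<Rightarrow> bool" where
  "Bfree_eta b n = (\<forall>i. \<not> (int (b i) dvd n))"

definition X_eta :: "(nat \<Rightarrow> nat) \<Rightarrow> (int \<Rightarrow> bool) set" where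
  "X_eta b = {y. \<forall>m n. \<exists>t. \<forall>j\<in>{m..n}. y j = Bfree_eta b (j + t)}"

definition mp_system :: "'a measure \<Rightarrow> ('a \<Rightarrow> 'a) \<Rightarrow> bool" where
  "mp_system M T \<longleftrightarrow> prob_space M \<and> T \<in> measurable M M \<and> distr M M T = M"

definition ergodic :: "'a measure \<Rightarrow> ('a \<Rightarrow> 'a) \<Rightarrow> bool" where
  "ergodic M T \<longleftrightarrow> mp_system M T \<and>
     (\<forall>A\<in>sets M. T -` A \<inter> space M = A \<longrightarrow> measure M A = 0 \<or> measure M A = 1)"

definition joining :: "'a measure \<Rightarrow> ('a \<Rightarrow> 'a) \<Rightarrow> 'b measure \<Rightarrow> ('b \<Rightarrow> 'b)
    \<Rightarrow> ('a \<times> 'b) measure \<Rightarrow> bool" where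
  "joining M T N U \<rho> \<longleftrightarrow>
     sets \<rho> = sets (M \<Otimes>\<^sub>M N) \<and> prob_space \<rho> \<and>
     (\<lambda>(x, y). (T x, U y)) \<in> measurable \<rho> \<rho> \<and>
     distr \<rho> \<rho> (\<lambda>(x, y). (T x, U y)) = \<rho> \<and>
     distr \<rho> M fst = M \<and> distr \<rho> N snd = N"

definition disjoint_systems :: "'a measure \<Rightarrow> ('a \<Rightarrow> 'a) \<Rightarrow> 'b measure \<Rightarrow> ('b \<Rightarrow> 'b) \<Rightarrow> bool" where
  "disjoint_systems M T N U \<longleftrightarrow> (\<forall>\<rho>. joining M T N U \<rho> \<longrightarrow> \<rho> = M \<Otimes>\<^sub>M N)"

definition rot :: "nat \<Rightarrow> nat \<Rightarrow> nat" where
  "rot q z = (z + 1) mod q"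

definition cyclic_space :: "nat \<Rightarrow> nat measure" where
  "cyclic_space q = uniform_count_measure {..<q}"

end

theory Submission
  imports Defs
begin


definition mm :: "nat \<Rightarrow> (int \<Rightarrow> bool) \<Rightarrow> nat \<Rightarrow> bool" where
  "mm q y z \<longleftrightarrow> (\<forall>n. int q dvd (n + int z) \<longrightarrow> \<not> y n)"

definition cr :: "nat \<Rightarrow> (int \<Rightarrow> bool) \<Rightarrow> real" where
  "cr q y = real (card {w\<in>{..<q}. mm q y w})"

definition gr :: "nat \<Rightarrow> (int \<Rightarrow> bool) \<Rightarrow> nat \<Rightarrow> real" where
  "gr q y z = (if cr q y = 0 then 1 else if mm q y z then real q / cr q y else 0)"

lemma mm_shift: "mm q (shift y) (Suc z) = mm q y z"
  unfolding mm_def shift_def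
proof
  assume H: "\<forall>n. int q dvd n + int (Suc z) \<longrightarrow> \<not> y (n + 1)"
  show "\<forall>n. int q dvd n + int z \<longrightarrow> \<not> y n"
  proof (intro allI impI)
    fix n assume "int q dvd n + int z"
    then have "int q dvd (n - 1) + int (Suc z)" by simp
    from H[rule_format, OF this] show "\<not> y n" by simp
  qed
next
  assume H: "\<forall>n. int q dvd n + int z \<longrightarrow> \<not> y n"
  show "\<forall>n. int q dvd n + int (Suc z) \<longrightarrow> \<not> y (n + 1)"
  proof (intro allI impI)
    fix n assume "int q dvd n + int (Suc z)"
    then have "int q dvd (n + 1) + int z" by (simp add: add.commute add.left_commute)
    from H[rule_format, OF this] show "\<not> y (n+1)" .
  qed
qed

lemma mm_mod: "mm q y (z mod q) = mm q y z"
proof -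
  have "int q dvd n + int (z mod q) \<longleftrightarrow> int q dvd n + int z" for n
  proof -
    have "int z = int (z mod q) + int q * int (z div q)"
      by (metis of_nat_add of_nat_mult mod_mult_div_eq add.commute)
    then show ?thesis
      by (metis (no_types, lifting) add.assoc dvd_add_left_iff dvd_triv_left)
  qed
  then show ?thesis unfolding mm_def by simp
qed

lemma mm_shift_rot: "mm q (shift y) (rot q z) = mm q y z"
  unfolding rot_def by (simp add: mm_mod mm_shift)

lemma rot_eq: "a < q \<Longrightarrow> rot q a = (if Suc a = q then 0 else Suc a)"
  unfolding rot_def by auto

lemma rot_bij: "0 < q \<Longrightarrow> bij_betw (rot q) {..<q} {..<q}"
proof -
  assume q: "0 < q"
  have inj: "inj_on (rot q) {..<q}"
  proof
    fix a c assume "a \<in> {..<q}" "c \<in> {..<q}" "rot q a = rot q c"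
    then show "a = c" using rot_eq[of a q] rot_eq[of c q] by (auto split: if_splits)
  qed
  have "rot q ` {..<q} = {..<q}"
  proof
    show "rot q ` {..<q} \<subseteq> {..<q}" using q by (auto simp: rot_def)
    show "{..<q} \<subseteq> rot q ` {..<q}"
    proof
      fix w assume w: "w \<in> {..<q}"
      show "w \<in> rot q ` {..<q}"
      proof (cases w)
        case 0
        then show ?thesis using q by (auto simp: rot_def intro!: image_eqI[of _ _ "q - 1"])
      next
        case (Suc v)
        then show ?thesis using w by (auto simp: rot_def intro!: image_eqI[of _ _ v])
      qed
    qed
  qed
  with inj show ?thesis by (simp add: bij_betw_def)
qed

lemma card_mm_eq: "{w\<in>{..<q}. mm q y w} = {w\<in>{..<q}. mm q y w}" ..

lemma cr_sum: "cr q y = (\<Sum>w<q. if mm q y w then 1 else 0)"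
  unfolding cr_def by (simp add: sum.If_cases Int_def)

lemma cr_shift: "0 < q \<Longrightarrow> cr q (shift y) = cr q y"
proof -
  assume q: "0 < q"
  have "cr q (shift y) = (\<Sum>w<q. if mm q (shift y) (rot q w) then 1 else 0)"
    unfolding cr_sum by (rule sum.reindex_bij_betw[OF rot_bij[OF q], symmetric])
  also have "\<dots> = cr q y" unfolding cr_sum mm_shift_rot ..
  finally show ?thesis .
qed

lemma gr_shift: "0 < q \<Longrightarrow> gr q (shift y) (rot q z) = gr q y z"
  unfolding gr_def by (simp add: cr_shift mm_shift_rot)

lemma gr_nonneg: "0 \<le> gr q y z"
  unfolding gr_def cr_def by auto

lemma gr_sum: "0 < q \<Longrightarrow> (\<Sum>z<q. gr q y z) = real q"
proof (cases "cr q y = 0")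
  case True then show ?thesis by (simp add: gr_def)
next
  case False
  assume q: "0 < q"
  have "(\<Sum>z<q. gr q y z) = (\<Sum>z<q. (if mm q y z then 1 else 0) * (real q / cr q y))"
    using False by (intro sum.cong) (auto simp: gr_def)
  also have "\<dots> = (\<Sum>z<q. (if mm q y z then 1 else 0)) * (real q / cr q y)"
    by (rule sum_distrib_right[symmetric])
  also have "\<dots> = cr q y * (real q / cr q y)" by (simp only: cr_sum)
  finally show ?thesis using False by simp
qed




lemma pred_y[measurable]: "Measurable.pred shift_space (\<lambda>y. y n)"
  unfolding shift_space_def by (rule measurable_component_singleton) simp

lemma pred_mm[measurable]: "Measurable.pred shift_space (\<lambda>y. mm q y z)"
  unfolding mm_def by measurable

lemma meas_gr: "(\<lambda>y. gr q y z) \<in> borel_measurable shift_space"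
  unfolding gr_def cr_sum by measurable

lemma snd_cyc: "snd \<in> measurable (M \<Otimes>\<^sub>M cyclic_space q) (count_space UNIV)"
proof -
  have "(\<lambda>x. x) \<in> measurable (cyclic_space q) (count_space UNIV)"
    by (auto simp: measurable_count_space_eq2_countable cyclic_space_def sets_uniform_count_measure
          space_uniform_count_measure)
  then show ?thesis by measurable
qed

lemma meas_g2:
  assumes "sets M = sets shift_space"
  shows "(\<lambda>p. ennreal (gr q (fst p) (snd p))) \<in> borel_measurable (M \<Otimes>\<^sub>M cyclic_space q)"
proof (rule measurable_compose_countable[where f="\<lambda>z p. ennreal (gr q (fst p) z)", OF _ snd_cyc])
  fix z
  have "(\<lambda>y. gr q y z) \<in> borel_measurable M" using meas_gr measurable_cong_sets[OF assms refl] by blast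
  then show "(\<lambda>p. ennreal (gr q (fst p) z)) \<in> borel_measurable (M \<Otimes>\<^sub>M cyclic_space q)" by measurable
qed

lemma pred_mm2:
  assumes "sets M = sets shift_space"
  shows "Measurable.pred (M \<Otimes>\<^sub>M cyclic_space q) (\<lambda>p. mm q (fst p) (snd p))"

proof (rule measurable_compose_countable[where f="\<lambda>z p. mm q (fst p) z", OF _ snd_cyc])
  fix z
  have "Measurable.pred M (\<lambda>y. mm q y z)" using pred_mm measurable_cong_sets[OF assms refl] by blast
  then show "(\<lambda>p. mm q (fst p) z) \<in> measurable (M \<Otimes>\<^sub>M cyclic_space q) (count_space UNIV)" by measurable
qed

lemma nn_integral_cyc:
  "integral\<^sup>N (cyclic_space q) f = (\<Sum>z<q. ennreal (1 / real q) * f z)"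
  unfolding cyclic_space_def uniform_count_measure_def
  by (subst nn_integral_point_measure_finite) auto

lemma int_gr_cyc: "0 < q \<Longrightarrow> (\<integral>\<^sup>+ z. ennreal (gr q y z) \<partial>cyclic_space q) = 1"
proof -
  assume q: "0 < q"
  have "(\<integral>\<^sup>+ z. ennreal (gr q y z) \<partial>cyclic_space q) = (\<Sum>z<q. ennreal (1 / real q * gr q y z))"
    unfolding nn_integral_cyc by (intro sum.cong refl ennreal_mult[symmetric]) (auto simp: gr_nonneg)
  also have "\<dots> = ennreal (\<Sum>z<q. 1 / real q * gr q y z)"
    by (rule sum_ennreal) (simp add: gr_nonneg)
  also have "(\<Sum>z<q. 1 / real q * gr q y z) = 1"
    using q by (simp add: sum_divide_distrib[symmetric] gr_sum)
  finally show ?thesis by simp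
qed

lemma prob_cyc: "0 < q \<Longrightarrow> prob_space (cyclic_space q)"
  unfolding cyclic_space_def by (rule prob_space_uniform_count_measure) auto

lemma distr_rot: "0 < q \<Longrightarrow> distr (cyclic_space q) (cyclic_space q) (rot q) = cyclic_space q"
proof -
  assume q: "0 < q"
  have bij: "bij_betw (rot q) {..<q} {..<q}" by (rule rot_bij[OF q])
  have meas: "rot q \<in> measurable (cyclic_space q) (cyclic_space q)"
    using q by (auto simp: cyclic_space_def sets_uniform_count_measure space_uniform_count_measure
      measurable_def rot_def)
  show ?thesis
  proof (rule measure_eqI)
    fix A assume "A \<in> sets (distr (cyclic_space q) (cyclic_space q) (rot q))"
    then have A: "A \<subseteq> {..<q}" by (simp add: cyclic_space_def sets_uniform_count_measure)
    have "rot q -` A \<inter> {..<q} \<subseteq> {..<q}" by auto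
    have "card (rot q -` A \<inter> {..<q}) = card A"
    proof -
      have "rot q ` (rot q -` A \<inter> {..<q}) = A"
      proof
        show "A \<subseteq> rot q ` (rot q -` A \<inter> {..<q})"
        proof
          fix x assume x: "x \<in> A"
          then have "x \<in> rot q ` {..<q}" using A bij by (auto simp: bij_betw_def)
          then obtain w where "w < q" "x = rot q w" by auto
          then show "x \<in> rot q ` (rot q -` A \<inter> {..<q})" using x by auto
        qed
      qed auto
      then have "bij_betw (rot q) (rot q -` A \<inter> {..<q}) A"
        using bij unfolding bij_betw_def by (auto intro: inj_on_subset)
      then show ?thesis by (rule bij_betw_same_card)
    qed
    then show "emeasure (distr (cyclic_space q) (cyclic_space q) (rot q)) A = emeasure (cyclic_space q) A"
      using A meas
      by (simp add: emeasure_distr cyclic_space_def space_uniform_count_measure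
            emeasure_uniform_count_measure sets_uniform_count_measure)
  qed simp
qed




lemma X_mm:
  assumes q: "q = b k" "0 < q" and y: "y \<in> X_eta b"
  shows "\<exists>z<q. mm q y z"
proof (rule ccontr)
  assume "\<not> (\<exists>z<q. mm q y z)"
  then have "\<forall>z. \<exists>n. z < q \<longrightarrow> int q dvd n + int z \<and> y n" by (auto simp: mm_def)
  then obtain f where f: "\<And>z. z < q \<Longrightarrow> int q dvd f z + int z \<and> y (f z)" by metis
  define B where "B = Max ((\<lambda>z. \<bar>f z\<bar>) ` {..<q})"
  have fB: "z < q \<Longrightarrow> \<bar>f z\<bar> \<le> B" for z unfolding B_def by (rule Max_ge) auto
  from y obtain t where t: "\<And>j. j \<in> {-B..B} \<Longrightarrow> y j = Bfree_eta b (j + t)"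
    unfolding X_eta_def by blast
  define z where "z = nat (t mod int q)"
  have zq: "z < q" using q by (simp add: z_def nat_less_iff)
  have zi: "int z = t mod int q" using q by (simp add: z_def)
  have d1: "int q dvd f z + int z" and yf: "y (f z)" using f[OF zq] by auto
  have "f z \<in> {-B..B}" using fB[OF zq] by auto
  with t yf have "Bfree_eta b (f z + t)" by simp
  then have nd: "\<not> int (b k) dvd f z + t" unfolding Bfree_eta_def by blast
  have "int q dvd t - int z" using zi by (simp add: mod_eq_dvd_iff)
  with d1 have "int q dvd (f z + int z) + (t - int z)" by (rule dvd_add)
  then have "int q dvd f z + t" by simp
  with nd q show False by simp
qed




theorem mainTheorem9:
  fixes b :: "nat \<Rightarrow> nat" and \<nu> :: "(int \<Rightarrow> bool) measure" and k :: nat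
  assumes b_ge2: "\<And>i. b i \<ge> 2"
    and b_coprime: "\<And>i j. i \<noteq> j \<Longrightarrow> coprime (b i) (b j)"
    and b_summable: "summable (\<lambda>i. 1 / real (b i))"
    and \<nu>_sets: "sets \<nu> = sets shift_space"
    and \<nu>_prob: "prob_space \<nu>"
    and \<nu>_on_X: "emeasure \<nu> (X_eta b) = 1"
    and \<nu>_ergodic: "ergodic \<nu> shift"
    and \<nu>_not_dirac0: "\<nu> \<noteq> return shift_space (\<lambda>_. False)"
  shows "\<not> disjoint_systems \<nu> shift (cyclic_space (b k)) (rot (b k))"
proof
  define q where "q = b k"
  have q: "0 < q" using b_ge2[of k] by (simp add: q_def)
  define N where "N = cyclic_space q"
  define P where "P = \<nu> \<Otimes>\<^sub>M N"
  define g where "g = (\<lambda>p. ennreal (gr q (fst p) (snd p)))"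
  define \<rho> where "\<rho> = density P g"
  define T2 where "T2 = (\<lambda>(x::int\<Rightarrow>bool, y::nat). (shift x, rot q y))"
  assume disj: "disjoint_systems \<nu> shift (cyclic_space (b k)) (rot (b k))"
  interpret nu: prob_space \<nu> by (rule \<nu>_prob)
  have Nprob: "prob_space N" unfolding N_def using q by (rule prob_cyc)
  interpret Nq: prob_space N by (rule Nprob)
  interpret PP: pair_prob_space \<nu> N ..
  have spN: "space N = {..<q}" by (simp add: N_def cyclic_space_def space_uniform_count_measure)
  have setsN: "sets N = Pow {..<q}" by (simp add: N_def cyclic_space_def sets_uniform_count_measure)
  have mp: "mp_system \<nu> shift" using \<nu>_ergodic by (simp add: ergodic_def)
  have sh_meas[measurable]: "shift \<in> measurable \<nu> \<nu>" and sh_distr: "distr \<nu> \<nu> shift = \<nu>"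
    using mp by (auto simp: mp_system_def)
  have rot_meas[measurable]: "rot q \<in> measurable N N"
    using q by (auto simp: setsN spN measurable_def rot_def)
  have g_meas[measurable]: "g \<in> borel_measurable P"
    unfolding g_def P_def N_def by (rule meas_g2[OF \<nu>_sets])
  have rho_E: "emeasure \<rho> F = (\<integral>\<^sup>+ y. \<integral>\<^sup>+ z. g (y,z) * indicator F (y,z) \<partial>N \<partial>\<nu>)"
    if F: "F \<in> sets P" for F
  proof -
    have "emeasure \<rho> F = (\<integral>\<^sup>+ p. g p * indicator F p \<partial>P)"
      unfolding \<rho>_def by (rule emeasure_density[OF g_meas F])
    also have "\<dots> = (\<integral>\<^sup>+ y. \<integral>\<^sup>+ z. g (y,z) * indicator F (y,z) \<partial>N \<partial>\<nu>)"
      unfolding P_def using F[unfolded P_def] g_meas[unfolded P_def]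
      by (subst Nq.nn_integral_fst[symmetric]) auto
    finally show ?thesis .
  qed
  have int_g: "(\<integral>\<^sup>+ z. g (y,z) \<partial>N) = 1" for y
    unfolding g_def N_def using q by (simp add: int_gr_cyc)
  have sets_rho: "sets \<rho> = sets P" by (simp add: \<rho>_def)
  have space_rho: "space \<rho> = space P" by (simp add: \<rho>_def)
  have rho_prob: "prob_space \<rho>"
  proof
    have "emeasure \<rho> (space P) = (\<integral>\<^sup>+ y. \<integral>\<^sup>+ z. g (y,z) * indicator (space P) (y,z) \<partial>N \<partial>\<nu>)"
      by (rule rho_E) simp
    also have "\<dots> = (\<integral>\<^sup>+ y. 1 \<partial>\<nu>)"
    proof (rule nn_integral_cong)
      fix y assume y: "y \<in> space \<nu>"
      have "(\<integral>\<^sup>+ z. g (y,z) * indicator (space P) (y,z) \<partial>N) = (\<integral>\<^sup>+ z. g (y,z) \<partial>N)"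
        by (rule nn_integral_cong) (use y in \<open>auto simp: P_def space_pair_measure\<close>)
      then show "(\<integral>\<^sup>+ z. g (y,z) * indicator (space P) (y,z) \<partial>N) = 1" using int_g by simp
    qed
    also have "\<dots> = 1" by (simp add: nu.emeasure_space_1)
    finally show "emeasure \<rho> (space \<rho>) = 1" by (simp add: space_rho)
  qed
  have T2_meas: "T2 \<in> measurable P P" unfolding T2_def P_def by measurable
  have gT2: "(\<lambda>p. g (T2 p)) = g"
    using q by (auto simp: T2_def g_def gr_shift)
  have P_inv: "distr P P T2 = P"
  proof -
    have "distr \<nu> \<nu> shift \<Otimes>\<^sub>M distr N N (rot q) = distr (\<nu> \<Otimes>\<^sub>M N) (\<nu> \<Otimes>\<^sub>M N) (\<lambda>(x, y). (shift x, rot q y))"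
      by (rule pair_measure_distr) (use q in \<open>simp_all add: N_def distr_rot prob_space_imp_sigma_finite prob_cyc rot_meas[unfolded N_def]\<close>)
    then show ?thesis using sh_distr distr_rot[OF q] by (simp add: P_def T2_def N_def)
  qed
  have rho_inv: "distr \<rho> \<rho> T2 = \<rho>"
  proof -
    have "distr \<rho> \<rho> T2 = distr (density P (\<lambda>p. g (T2 p))) P T2"
      by (rule distr_cong) (simp_all add: gT2 \<rho>_def)
    also have "\<dots> = density (distr P P T2) g"
      by (rule density_distr[symmetric]) (simp_all add: T2_meas)
    also have "\<dots> = \<rho>" by (simp add: P_inv \<rho>_def)
    finally show ?thesis .
  qed
  have T2_meas_rho: "T2 \<in> measurable \<rho> \<rho>"
    using T2_meas by (simp add: measurable_cong_sets[OF sets_rho sets_rho])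
  have gz[measurable]: "(\<lambda>z. g (y,z)) \<in> borel_measurable N" if "y \<in> space \<nu>" for y
    using measurable_Pair2[OF g_meas[unfolded P_def] that] .
  have gy[measurable]: "(\<lambda>y. g (y,z)) \<in> borel_measurable \<nu>" for z
  proof -
    have "(\<lambda>y. gr q y z) \<in> borel_measurable \<nu>"
      using meas_gr measurable_cong_sets[OF \<nu>_sets refl] by blast
    then show ?thesis unfolding g_def by simp
  qed
  have marg1: "distr \<rho> \<nu> fst = \<nu>"
  proof (rule measure_eqI)
    show "sets (distr \<rho> \<nu> fst) = sets \<nu>" by simp
    fix A assume "A \<in> sets (distr \<rho> \<nu> fst)"
    then have A[measurable]: "A \<in> sets \<nu>" by simp
    have fst_meas: "fst \<in> measurable \<rho> \<nu>"
      using measurable_cong_sets[OF sets_rho refl, of \<nu>] by (simp add: P_def)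
    have pre: "fst -` A \<inter> space \<rho> = A \<times> space N"
      using sets.sets_into_space[OF A] by (auto simp: space_rho P_def space_pair_measure)
    have "emeasure (distr \<rho> \<nu> fst) A = emeasure \<rho> (A \<times> space N)"
      by (simp add: emeasure_distr[OF fst_meas A] pre)
    also have "\<dots> = (\<integral>\<^sup>+ y. \<integral>\<^sup>+ z. g (y,z) * indicator (A \<times> space N) (y,z) \<partial>N \<partial>\<nu>)"
      by (rule rho_E) (simp add: P_def)
    also have "\<dots> = (\<integral>\<^sup>+ y. indicator A y \<partial>\<nu>)"
    proof (rule nn_integral_cong)
      fix y assume y: "y \<in> space \<nu>"
      have "(\<integral>\<^sup>+ z. g (y,z) * indicator (A \<times> space N) (y,z) \<partial>N) = (\<integral>\<^sup>+ z. g (y,z) * indicator A y \<partial>N)"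
        by (rule nn_integral_cong) (auto simp: indicator_def)
      also have "\<dots> = (\<integral>\<^sup>+ z. g (y,z) \<partial>N) * indicator A y"
        by (rule nn_integral_multc) (simp add: y)
      finally show "(\<integral>\<^sup>+ z. g (y,z) * indicator (A \<times> space N) (y,z) \<partial>N) = indicator A y"
        by (simp add: int_g)
    qed
    also have "\<dots> = emeasure \<nu> A" by simp
    finally show "emeasure (distr \<rho> \<nu> fst) A = emeasure \<nu> A" .
  qed
  define h where "h = (\<lambda>z. \<integral>\<^sup>+ y. g (y,z) \<partial>\<nu>)"
  have h_rot: "h (rot q z) = h z" for z
  proof -
    have "h (rot q z) = (\<integral>\<^sup>+ y. g (y, rot q z) \<partial>distr \<nu> \<nu> shift)"
      unfolding h_def sh_distr ..
    also have "\<dots> = (\<integral>\<^sup>+ y. g (shift y, rot q z) \<partial>\<nu>)"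
      by (rule nn_integral_distr) simp_all
    also have "\<dots> = h z" unfolding h_def using gT2 unfolding T2_def
      by (metis (no_types, lifting) case_prod_conv)
    finally show ?thesis .
  qed
  have h_const: "z < q \<Longrightarrow> h z = h 0" for z
  proof (induction z)
    case (Suc z)
    then have "rot q z = Suc z" by (simp add: rot_def)
    then show ?case using Suc h_rot[of z] by simp
  qed simp
  have h_sum: "(\<Sum>z<q. h z) = ennreal (real q)"
  proof -
    have "(\<Sum>z<q. h z) = (\<integral>\<^sup>+ y. (\<Sum>z<q. g (y,z)) \<partial>\<nu>)"
      unfolding h_def by (rule nn_integral_sum[symmetric]) simp
    also have "\<dots> = (\<integral>\<^sup>+ y. ennreal (real q) \<partial>\<nu>)"
    proof (rule nn_integral_cong)
      fix y
      have "(\<Sum>z<q. g (y,z)) = ennreal (\<Sum>z<q. gr q y z)"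
        unfolding g_def by (simp add: sum_ennreal gr_nonneg)
      then show "(\<Sum>z<q. g (y,z)) = ennreal (real q)" using gr_sum[OF q] by simp
    qed
    also have "\<dots> = ennreal (real q)" by (simp add: nu.emeasure_space_1)
    finally show ?thesis .
  qed
  have h1: "z < q \<Longrightarrow> h z = 1" for z
  proof -
    assume z: "z < q"
    have "(\<Sum>z<q. h z) = (\<Sum>z<q. h 0)" by (intro sum.cong refl h_const) simp
    also have "\<dots> = of_nat q * h 0" by simp
    finally have e0: "of_nat q * h 0 = ennreal (real q)" using h_sum by simp
    have e: "h 0 * of_nat q = of_nat q"
      using e0 by (simp add: mult.commute ennreal_of_nat_eq_real_of_nat)
    have nz: "(of_nat q :: ennreal) \<noteq> 0" using q by simp
    have nt: "(of_nat q :: ennreal) \<noteq> top" by simp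
    have "h 0 = (h 0 * of_nat q) / of_nat q" by (rule ennreal_mult_divide_eq[symmetric, OF nz nt])
    also have "\<dots> = of_nat q / of_nat q" by (simp only: e)
    also have "\<dots> = 1" by (rule ennreal_divide_self[OF nz of_nat_less_top])
    finally have "h 0 = 1" .
    then show ?thesis using h_const[OF z] by simp
  qed
  have marg2: "distr \<rho> N snd = N"
  proof (rule measure_eqI)
    show "sets (distr \<rho> N snd) = sets N" by simp
    fix B assume "B \<in> sets (distr \<rho> N snd)"
    then have B[measurable]: "B \<in> sets N" by simp
    then have Bq: "B \<subseteq> {..<q}" by (simp add: setsN)
    have snd_meas: "snd \<in> measurable \<rho> N"
      using measurable_cong_sets[OF sets_rho refl, of N] by (simp add: P_def)
    have pre: "snd -` B \<inter> space \<rho> = space \<nu> \<times> B"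
      using Bq by (auto simp: space_rho P_def space_pair_measure spN)
    have "emeasure (distr \<rho> N snd) B = emeasure \<rho> (space \<nu> \<times> B)"
      by (simp add: emeasure_distr[OF snd_meas B] pre)
    also have "\<dots> = (\<integral>\<^sup>+ y. \<integral>\<^sup>+ z. g (y,z) * indicator (space \<nu> \<times> B) (y,z) \<partial>N \<partial>\<nu>)"
      by (rule rho_E) (simp add: P_def)
    also have "\<dots> = (\<integral>\<^sup>+ y. (\<Sum>z<q. (ennreal (1 / real q) * indicator B z) * g (y,z)) \<partial>\<nu>)"
    proof (rule nn_integral_cong)
      fix y assume y: "y \<in> space \<nu>"
      show "(\<integral>\<^sup>+ z. g (y,z) * indicator (space \<nu> \<times> B) (y,z) \<partial>N) =
          (\<Sum>z<q. (ennreal (1 / real q) * indicator B z) * g (y,z))"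
        unfolding N_def nn_integral_cyc using y
        by (intro sum.cong refl) (simp add: indicator_def)
    qed
    also have "\<dots> = (\<Sum>z<q. \<integral>\<^sup>+ y. (ennreal (1 / real q) * indicator B z) * g (y,z) \<partial>\<nu>)"
      by (rule nn_integral_sum) simp
    also have "\<dots> = (\<Sum>z<q. ennreal (1 / real q) * indicator B z)"
    proof (rule sum.cong[OF refl])
      fix z assume "z \<in> {..<q}"
      then have "h z = 1" by (simp add: h1)
      then show "(\<integral>\<^sup>+ y. (ennreal (1 / real q) * indicator B z) * g (y,z) \<partial>\<nu>) = ennreal (1 / real q) * indicator B z"
        by (subst nn_integral_cmult) (simp_all add: h_def)
    qed
    also have "\<dots> = (\<integral>\<^sup>+ z. indicator B z \<partial>N)"
      unfolding N_def nn_integral_cyc ..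
    also have "\<dots> = emeasure N B" by simp
    finally show "emeasure (distr \<rho> N snd) B = emeasure N B" .
  qed
  have join: "joining \<nu> shift N (rot q) \<rho>"
    unfolding joining_def
    using sets_rho rho_prob T2_meas_rho rho_inv marg1 marg2
    by (simp add: P_def T2_def)
  have rhoP: "\<rho> = P"
    using disj join unfolding disjoint_systems_def by (simp add: N_def q_def P_def)
  have pm[measurable]: "Measurable.pred P (\<lambda>p. mm q (fst p) (snd p))"
    unfolding P_def N_def by (rule pred_mm2[OF \<nu>_sets])
  define E where "E = {p \<in> space P. \<not> mm q (fst p) (snd p)}"
  have E_sets[measurable]: "E \<in> sets P" unfolding E_def by measurable
  have AEX: "AE y in \<nu>. y \<in> X_eta b"
    by (rule nu.AE_prob_1) (simp add: measure_def \<nu>_on_X)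
  have "emeasure \<rho> E = (\<integral>\<^sup>+ y. \<integral>\<^sup>+ z. g (y,z) * indicator E (y,z) \<partial>N \<partial>\<nu>)"
    by (rule rho_E[OF E_sets])
  also have "\<dots> = (\<integral>\<^sup>+ y. 0 \<partial>\<nu>)"
  proof (rule nn_integral_cong_AE)
    show "AE y in \<nu>. (\<integral>\<^sup>+ z. g (y,z) * indicator E (y,z) \<partial>N) = 0"
      using AEX
    proof eventually_elim
      fix y assume y: "y \<in> X_eta b"
      obtain z0 where z0: "z0 < q" "mm q y z0" using X_mm[OF q_def q y] by blast
      have "card {w\<in>{..<q}. mm q y w} \<noteq> 0" using z0 by (auto simp: card_eq_0_iff)
      then have cr: "cr q y \<noteq> 0" by (simp add: cr_def)
      have "(\<integral>\<^sup>+ z. g (y,z) * indicator E (y,z) \<partial>N) = (\<integral>\<^sup>+ z. 0 \<partial>N)"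
        by (rule nn_integral_cong) (auto simp: g_def gr_def cr E_def indicator_def)
      then show "(\<integral>\<^sup>+ z. g (y,z) * indicator E (y,z) \<partial>N) = 0" by simp
    qed
  qed
  finally have rhoE: "emeasure \<rho> E = 0" by simp
  define Y1 where "Y1 = {y \<in> space \<nu>. \<exists>n. y n}"
  have py: "Measurable.pred \<nu> (\<lambda>y. y n)" for n
    using pred_y measurable_cong_sets[OF \<nu>_sets refl] by blast
  have Y1_sets[measurable]: "Y1 \<in> sets \<nu>" unfolding Y1_def using py by measurable
  have Y1_pos: "emeasure \<nu> Y1 \<noteq> 0"
  proof
    assume Y0: "emeasure \<nu> Y1 = 0"
    have null: "Y1 \<in> null_sets \<nu>" using Y0 Y1_sets by auto
    have z_sp: "(\<lambda>_. False) \<in> space \<nu>"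
      using sets_eq_imp_space_eq[OF \<nu>_sets] by (simp add: shift_space_def space_PiM)
    have "\<nu> = return shift_space (\<lambda>_. False)"
    proof (rule measure_eqI)
      show "sets \<nu> = sets (return shift_space (\<lambda>_. False))" using \<nu>_sets by simp
      fix A assume A: "A \<in> sets \<nu>"
      have "emeasure \<nu> A = emeasure \<nu> (A - Y1)" by (rule emeasure_Diff_null_set[symmetric, OF null A])
      also have "\<dots> = indicator A (\<lambda>_. False)"
      proof (cases "(\<lambda>_. False) \<in> A")
        case True
        have "A - Y1 = space \<nu> - Y1"
        proof
          show "A - Y1 \<subseteq> space \<nu> - Y1" using sets.sets_into_space[OF A] by auto
          show "space \<nu> - Y1 \<subseteq> A - Y1"
          proof
            fix x assume x: "x \<in> space \<nu> - Y1"
            then have "x = (\<lambda>_. False)" by (auto simp: Y1_def)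
            then show "x \<in> A - Y1" using True x by simp
          qed
        qed
        then have "emeasure \<nu> (A - Y1) = emeasure \<nu> (space \<nu>) - emeasure \<nu> Y1"
          by (simp add: emeasure_compl[OF Y1_sets])
        then show ?thesis using True Y0 by (simp add: nu.emeasure_space_1)
      next
        case False
        have empty: "A - Y1 = {}"
        proof (rule ccontr)
          assume "A - Y1 \<noteq> {}"
          then obtain x where x: "x \<in> A" "x \<notin> Y1" by auto
          then have "x \<in> space \<nu>" using sets.sets_into_space[OF A] by auto
          with x have "x = (\<lambda>_. False)" by (auto simp: Y1_def)
          with x False show False by simp
        qed
        show ?thesis unfolding empty using False by simp
      qed
      also have "\<dots> = emeasure (return shift_space (\<lambda>_. False)) A"
        using A \<nu>_sets by (simp add: emeasure_return)
      finally show "emeasure \<nu> A = emeasure (return shift_space (\<lambda>_. False)) A" .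
    qed
    with \<nu>_not_dirac0 show False by simp
  qed
  have "emeasure P E = (\<integral>\<^sup>+ p. indicator E p \<partial>P)" by simp
  also have "\<dots> = (\<integral>\<^sup>+ y. \<integral>\<^sup>+ z. indicator E (y,z) \<partial>N \<partial>\<nu>)"
    unfolding P_def using E_sets[unfolded P_def]
    by (subst Nq.nn_integral_fst[symmetric]) auto
  also have "\<dots> \<ge> (\<integral>\<^sup>+ y. ennreal (1 / real q) * indicator Y1 y \<partial>\<nu>)"
  proof (rule nn_integral_mono)
    fix y assume y: "y \<in> space \<nu>"
    show "ennreal (1 / real q) * indicator Y1 y \<le> (\<integral>\<^sup>+ z. indicator E (y,z) \<partial>N)"
    proof (cases "y \<in> Y1")
      case True
      then obtain n where n: "y n" by (auto simp: Y1_def)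
      define z0 where "z0 = nat ((- n) mod int q)"
      have z0q: "z0 < q" using q by (simp add: z0_def nat_less_iff)
      have zi: "int z0 = (- n) mod int q" using q by (simp add: z0_def)
      have "(n + int z0) mod int q = (n + - n) mod int q"
        unfolding zi by (rule mod_add_right_eq)
      then have "int q dvd n + int z0" by (simp add: mod_0_imp_dvd)
      then have nm: "\<not> mm q y z0" using n unfolding mm_def by blast
      have inE: "(y, z0) \<in> E" using y z0q nm by (simp add: E_def P_def space_pair_measure spN)
      have "ennreal (1 / real q) * indicator Y1 y = ennreal (1 / real q) * indicator E (y,z0)"
        using True inE by simp
      also have "\<dots> \<le> (\<Sum>z<q. ennreal (1 / real q) * indicator E (y,z))"
        by (rule member_le_sum) (simp_all add: z0q)
      also have "\<dots> = (\<integral>\<^sup>+ z. indicator E (y,z) \<partial>N)"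
        unfolding N_def nn_integral_cyc ..
      finally show ?thesis .
    qed simp
  qed
  finally have "(\<integral>\<^sup>+ y. ennreal (1 / real q) * indicator Y1 y \<partial>\<nu>) \<le> emeasure P E" .
  moreover have "(\<integral>\<^sup>+ y. ennreal (1 / real q) * indicator Y1 y \<partial>\<nu>) = ennreal (1 / real q) * emeasure \<nu> Y1"
    by (rule nn_integral_cmult_indicator) simp
  moreover have "ennreal (1 / real q) * emeasure \<nu> Y1 \<noteq> 0" using Y1_pos q by simp
  ultimately show False using rhoE rhoP by (metis le_zero_eq)
qed


end
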